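(* Let $H$ be a numerical semigroup, $k$ a field, and $R=k[H]$ its semigroup ring. Suppose $R$ is a Gorenstein ring (equivalently, $H$ is symmetric). Then $$\#\{I \mid I \text{ is a graded ideal of } R \text{ such that } R/I \text{ is Gorenstein and } \mu_R(I)\ge 2\} = \mathrm{c}(H).$$
   Context: A numerical semigroup is a submonoid $H\subseteq \mathbb{N}$ (with $0\in H$, closed under addition) with $\mathbb{N}\setminus H$ finite; write $H=\langle a_1,\dots,a_\ell\rangle$ with $\gcd(a_1,\dots,a_\ell)=1$. The semigroup ring is $R=k[H]=k[t^h\mid h\in H]\subseteq k[t]$ ($t$ an indeterminate), graded by $\deg t=1$, so $R_n=kt^n$ if $n\in H$ and $R_n=0$ otherwise. "Graded ideal" means homogeneous ideal for this grading. The conductor is $\mathrm{c}(H)=\min\{n\in\mathbb{Z}\mid m\in H \text{ for all integers } m\ge n\}$. $H$ is symmetric if $\#\{n\in H\mid n<\mathrm{c}(H)\}=\#(\mathbb{N}\setminus H)$. $\mu_R(I)$ denotes the minimal number of generators of $I$. *)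

theory Defs
  imports "HOL-Computational_Algebra.Polynomial"
begin

definition numerical_semigroup :: "nat set \<Rightarrow> bool" where
  "numerical_semigroup H \<longleftrightarrow>
     0 \<in> H \<and> (\<forall>a\<in>H. \<forall>b\<in>H. a + b \<in> H) \<and> finite (UNIV - H)"

definition conductor :: "nat set \<Rightarrow> nat" where
  "conductor H = (LEAST n. \<forall>m\<ge>n. m \<in> H)"

definition symmetric_sg :: "nat set \<Rightarrow> bool" where
  "symmetric_sg H \<longleftrightarrow> card {n \<in> H. n < conductor H} = card (UNIV - H)"

definition semigroup_ring :: "nat set \<Rightarrow> 'a::field poly set" where
  "semigroup_ring H = {p. \<forall>n. coeff p n \<noteq> 0 \<longrightarrow> n \<in> H}"

definition ideal_of :: "'a::field poly set \<Rightarrow> 'a poly set \<Rightarrow> bool" where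
  "ideal_of R I \<longleftrightarrow> I \<subseteq> R \<and> 0 \<in> I \<and> (\<forall>x\<in>I. \<forall>y\<in>I. x + y \<in> I)
     \<and> (\<forall>r\<in>R. \<forall>x\<in>I. r * x \<in> I)"

definition graded_ideal :: "'a::field poly set \<Rightarrow> 'a poly set \<Rightarrow> bool" where
  "graded_ideal R I \<longleftrightarrow> ideal_of R I \<and> (\<forall>p\<in>I. \<forall>n. monom (coeff p n) n \<in> I)"

definition ideal_gen :: "'a::field poly set \<Rightarrow> 'a poly set \<Rightarrow> 'a poly set" where
  "ideal_gen R S = {p. \<exists>f. (\<forall>s\<in>S. f s \<in> R) \<and> p = (\<Sum>s\<in>S. f s * s)}"

definition mu :: "'a::field poly set \<Rightarrow> 'a poly set \<Rightarrow> nat" where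
  "mu R I = (LEAST n. \<exists>S. finite S \<and> S \<subseteq> I \<and> card S = n \<and> ideal_gen R S = I)"

definition max_ideal :: "'a::field poly set \<Rightarrow> 'a poly set" where
  "max_ideal R = {p \<in> R. coeff p 0 = 0}"

text \<open>Preimage in R of the socle (0 :_{R/I} m) of R/I.\<close>
definition socle_pre :: "'a::field poly set \<Rightarrow> 'a poly set \<Rightarrow> 'a poly set" where
  "socle_pre R I = {p \<in> R. \<forall>q\<in>max_ideal R. p * q \<in> I}"

text \<open>Gorenstein property of the Artinian local ring R/I (I a nonzero proper
  graded ideal): the socle of R/I is a one-dimensional k-vector space.\<close>
definition gorenstein_quot :: "'a::field poly set \<Rightarrow> 'a poly set \<Rightarrow> bool" where
  "gorenstein_quot R I \<longleftrightarrow>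
     (\<exists>s\<in>socle_pre R I. s \<notin> I \<and> (\<forall>p\<in>socle_pre R I. \<exists>c. p - smult c s \<in> I))"

end

theory Submission
  imports Defs
begin

definition Ii :: "nat set \<Rightarrow> 'a::field poly set" where
  "Ii E = {p. \<forall>n. coeff p n \<noteq> 0 \<longrightarrow> n \<in> E}"

definition sgideal :: "nat set \<Rightarrow> nat set \<Rightarrow> bool" where
  "sgideal H E \<longleftrightarrow> E \<subseteq> H \<and> (\<forall>e\<in>E. \<forall>h\<in>H. e + h \<in> E)"

lemma R_eq: "semigroup_ring H = Ii H"
  by (simp add: semigroup_ring_def Ii_def)

lemma Ii_monom: "monom c n \<in> Ii E \<longleftrightarrow> c = 0 \<or> n \<in> E"
  by (auto simp: Ii_def)

lemma Ii_add: "p \<in> Ii E \<Longrightarrow> q \<in> Ii E \<Longrightarrow> p + q \<in> Ii E"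
  by (auto simp: Ii_def) (metis add.right_neutral)

lemma Ii_sum: "finite A \<Longrightarrow> (\<And>i. i \<in> A \<Longrightarrow> g i \<in> Ii E) \<Longrightarrow> sum g A \<in> Ii E"
  by (induction A rule: finite_induct) (auto simp: Ii_def, metis add.right_neutral)

lemma Ii_mult:
  assumes "sgideal H E" "r \<in> Ii H" "p \<in> Ii E"
  shows "r * p \<in> Ii E"
  unfolding Ii_def
proof (intro CollectI allI impI)
  fix n assume "coeff (r * p) n \<noteq> 0"
  then obtain i where "i \<le> n" "coeff r i * coeff p (n - i) \<noteq> 0"
    unfolding coeff_mult by (metis (no_types, lifting) atMost_iff sum.neutral)
  then have "i \<in> H" "n - i \<in> E" using assms(2,3) by (auto simp: Ii_def)
  then have "(n - i) + i \<in> E" using assms(1) by (auto simp: sgideal_def)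
  then show "n \<in> E" using \<open>i \<le> n\<close> by simp
qed

lemma sgideal_H: "numerical_semigroup H \<Longrightarrow> sgideal H H"
  by (auto simp: sgideal_def numerical_semigroup_def)

lemma Ii_sub: "E \<subseteq> H \<Longrightarrow> Ii E \<subseteq> Ii H"
  by (auto simp: Ii_def)

lemma Ii_graded:
  assumes "numerical_semigroup H" "sgideal H E"
  shows "graded_ideal (semigroup_ring H) (Ii E :: 'a::field poly set)"
  using assms Ii_mult[OF assms(2)] Ii_sub[of E H]
  unfolding graded_ideal_def ideal_of_def R_eq
  by (auto simp: Ii_add sgideal_def Ii_monom) (auto simp: Ii_def)

lemma graded_Ii:
  assumes "numerical_semigroup H" "graded_ideal (semigroup_ring H) (I :: 'a::field poly set)"
  shows "sgideal H {n. monom 1 n \<in> I} \<and> I = Ii {n. monom 1 n \<in> I}"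
proof -
  let ?E = "{n. monom 1 n \<in> I}"
  have id: "ideal_of (Ii H) I" and gr: "\<And>p n. p \<in> I \<Longrightarrow> monom (coeff p n) n \<in> I"
    using assms(2) by (auto simp: graded_ideal_def R_eq)
  have sub: "I \<subseteq> Ii H" and add: "\<And>x y. x \<in> I \<Longrightarrow> y \<in> I \<Longrightarrow> x + y \<in> I"
    and mul: "\<And>r x. r \<in> Ii H \<Longrightarrow> x \<in> I \<Longrightarrow> r * x \<in> I" and z: "0 \<in> I"
    using id by (auto simp: ideal_of_def)
  have H0: "0 \<in> H" using assms(1) by (simp add: numerical_semigroup_def)
  have sc: "monom c n \<in> I" if "monom 1 n \<in> I" for c n
  proof -
    have "monom c 0 \<in> Ii H" using H0 by (simp add: Ii_monom)
    from mul[OF this that] show ?thesis by (simp add: mult_monom)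
  qed
  have "sgideal H ?E"
    unfolding sgideal_def
  proof safe
    fix n assume "monom 1 n \<in> I" then show "n \<in> H" using sub by (auto simp: Ii_monom)
  next
    fix e h assume "monom 1 e \<in> I" "h \<in> H"
    then have "monom 1 h * monom 1 e \<in> I" using mul by (simp add: Ii_monom)
    then show "monom 1 (e + h) \<in> I" by (simp add: mult_monom add.commute)
  qed
  moreover have "I = Ii ?E"
  proof safe
    fix p assume "p \<in> I"
    show "p \<in> Ii ?E" unfolding Ii_def
    proof (intro CollectI allI impI)
      fix n assume cn: "coeff p n \<noteq> 0"
      have "monom (coeff p n) n \<in> I" using gr \<open>p \<in> I\<close> by blast
      then have "monom (inverse (coeff p n)) 0 * monom (coeff p n) n \<in> I"
        using mul H0 by (simp add: Ii_monom)
      then show "monom 1 n \<in> I" using cn by (simp add: mult_monom)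
    qed
  next
    fix p :: "'a poly" assume "p \<in> Ii ?E"
    have "(\<Sum>i\<le>degree p. monom (coeff p i) i) \<in> I"
    proof (rule finite_induct[where P="\<lambda>A. A \<subseteq> {..degree p} \<longrightarrow> (\<Sum>i\<in>A. monom (coeff p i) i) \<in> I", THEN mp])
      show "finite {..degree p}" by simp
    next
      show "{} \<subseteq> {..degree p} \<longrightarrow> (\<Sum>i\<in>{}. monom (coeff p i) i) \<in> I" using z by simp
    next
      fix x F assume "finite F" "x \<notin> F" "F \<subseteq> {..degree p} \<longrightarrow> (\<Sum>i\<in>F. monom (coeff p i) i) \<in> I"
      moreover have "monom (coeff p x) x \<in> I"
      proof (cases "coeff p x = 0")
        case True then show ?thesis using z by simp
      next
        case False then have "monom 1 x \<in> I" using \<open>p \<in> Ii ?E\<close> by (auto simp: Ii_def)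
        then show ?thesis by (rule sc)
      qed
      ultimately show "insert x F \<subseteq> {..degree p} \<longrightarrow> (\<Sum>i\<in>insert x F. monom (coeff p i) i) \<in> I"
        using add by auto
    qed simp
    then show "p \<in> I" by (simp add: poly_as_sum_of_monoms)
  qed
  ultimately show ?thesis by blast
qed

lemma cond_ge:
  assumes "numerical_semigroup H" "conductor H \<le> m"
  shows "m \<in> H"
proof -
  have "finite (UNIV - H)" using assms(1) by (simp add: numerical_semigroup_def)
  then obtain N where "\<forall>x\<in>UNIV - H. x < N" using finite_nat_bounded by blast
  then have "\<forall>m\<ge>N. m \<in> H" by (meson DiffI UNIV_I not_le)
  then have "\<forall>m\<ge>conductor H. m \<in> H" unfolding conductor_def by (rule LeastI)
  with assms(2) show ?thesis by blast
qed

lemma cond_F: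
  assumes "numerical_semigroup H" "conductor H > 0"
  shows "conductor H - 1 \<notin> H"
proof
  assume a: "conductor H - 1 \<in> H"
  have "\<forall>m\<ge>conductor H - 1. m \<in> H"
  proof safe
    fix m assume "conductor H - 1 \<le> m"
    then have "m = conductor H - 1 \<or> conductor H \<le> m" by auto
    then show "m \<in> H" using a cond_ge[OF assms(1)] by auto
  qed
  then have "conductor H \<le> conductor H - 1" unfolding conductor_def by (rule Least_le)
  with assms(2) show False by simp
qed

lemma gaps_lt: "numerical_semigroup H \<Longrightarrow> m \<notin> H \<Longrightarrow> m < conductor H"
  using cond_ge by (metis not_le)

lemma sum_closed:
  assumes "0 \<in> J" "\<And>x y. x\<in>J \<Longrightarrow> y\<in>J \<Longrightarrow> x+y\<in>J" "finite A" "\<And>i. i\<in>A \<Longrightarrow> g i \<in> J"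
  shows "sum g A \<in> J"
  using assms(3,4)
proof (induction A rule: finite_induct)
  case empty then show ?case using assms(1) by simp
next
  case (insert x F) then show ?case using assms(2) by simp
qed

lemma gen_zero: "0 \<in> ideal_gen (Ii H) S"
  unfolding ideal_gen_def by (rule CollectI, rule exI[of _ "\<lambda>_. 0"]) (simp add: Ii_def)

lemma gen_add:
  fixes S :: "'a::field poly set"
  shows "p \<in> ideal_gen (Ii H) S \<Longrightarrow> q \<in> ideal_gen (Ii H) S \<Longrightarrow> p + q \<in> ideal_gen (Ii H) S"
  unfolding ideal_gen_def
proof safe
  fix f g :: "'a poly \<Rightarrow> 'a poly" assume "\<forall>s\<in>S. f s \<in> Ii H" "\<forall>s\<in>S. g s \<in> Ii H"
  then show "\<exists>h. (\<forall>s\<in>S. h s \<in> Ii H) \<and> (\<Sum>s\<in>S. f s * s) + (\<Sum>s\<in>S. g s * s) = (\<Sum>s\<in>S. h s * s)"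
    by (intro exI[of _ "\<lambda>s. f s + g s"]) (simp add: Ii_add sum.distrib distrib_right)
qed

lemma gen_mult:
  fixes S :: "'a::field poly set"
  assumes "numerical_semigroup H" "r \<in> Ii H" "p \<in> ideal_gen (Ii H) S"
  shows "r * p \<in> ideal_gen (Ii H) S"
proof -
  obtain f where f: "\<forall>s\<in>S. f s \<in> Ii H" "p = (\<Sum>s\<in>S. f s * s)" using assms(3) by (auto simp: ideal_gen_def)
  have "\<forall>s\<in>S. r * f s \<in> Ii H" using f(1) Ii_mult[OF sgideal_H[OF assms(1)] assms(2)] by blast
  moreover have "r * p = (\<Sum>s\<in>S. (r * f s) * s)" using f(2) by (simp add: sum_distrib_left mult.assoc)
  ultimately show ?thesis unfolding ideal_gen_def by (intro CollectI exI[of _ "\<lambda>s. r * f s"]) simp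
qed

lemma gen_mem:
  fixes S :: "'a::field poly set"
  assumes "numerical_semigroup H" "finite S" "s0 \<in> S"
  shows "s0 \<in> ideal_gen (Ii H) S"
proof -
  have H0: "0 \<in> H" using assms(1) by (simp add: numerical_semigroup_def)
  let ?f = "\<lambda>s. if s = s0 then 1 else 0"
  have "\<forall>s\<in>S. ?f s \<in> Ii H" using H0 by (auto simp: Ii_def)
  moreover have "(\<Sum>s\<in>S. ?f s * s) = (\<Sum>s\<in>S. if s = s0 then s else 0)"
    by (rule sum.cong) auto
  then have "s0 = (\<Sum>s\<in>S. ?f s * s)" using assms(2,3) by simp
  ultimately show ?thesis unfolding ideal_gen_def by (intro CollectI exI[of _ ?f]) simp
qed

lemma gen_eq:
  assumes ns: "numerical_semigroup H" and si: "sgideal H E" and fG: "finite G" and GE: "G \<subseteq> E"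
    and cov: "\<forall>m\<in>E. \<exists>e\<in>G. e \<le> m \<and> m - e \<in> H"
  shows "ideal_gen (Ii H) ((\<lambda>e. monom 1 e) ` G) = (Ii E :: 'a::field poly set)"
proof safe
  fix p :: "'a poly" assume "p \<in> ideal_gen (Ii H) ((\<lambda>e. monom 1 e) ` G)"
  then obtain f where f: "\<forall>s\<in>(\<lambda>e. monom 1 e) ` G. f s \<in> Ii H" "p = (\<Sum>s\<in>(\<lambda>e. monom 1 e) ` G. f s * s)"
    by (auto simp: ideal_gen_def)
  show "p \<in> Ii E" unfolding f(2)
  proof (rule Ii_sum)
    show "finite ((\<lambda>e. monom 1 e) ` G)" using fG by simp
  next
    fix s assume s: "s \<in> (\<lambda>e. monom (1::'a) e) ` G"
    then have "s \<in> Ii E" using GE by (auto simp: Ii_monom)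
    then show "f s * s \<in> Ii E" using Ii_mult[OF si] f(1) s by blast
  qed
next
  fix p :: "'a poly" assume p: "p \<in> Ii E"
  let ?J = "ideal_gen (Ii H) ((\<lambda>e. monom (1::'a) e) ` G)"
  have "(\<Sum>i\<le>degree p. monom (coeff p i) i) \<in> ?J"
  proof (rule sum_closed[OF gen_zero gen_add])
    show "finite {..degree p}" by (rule finite_atMost)
  next
    fix i assume "i \<in> {..degree p}"
    show "monom (coeff p i) i \<in> ?J"
    proof (cases "coeff p i = 0")
      case True then show ?thesis using gen_zero by simp
    next
      case False
      then have "i \<in> E" using p by (auto simp: Ii_def)
      then obtain e where e: "e \<in> G" "e \<le> i" "i - e \<in> H" using cov by blast
      have "monom (coeff p i) (i - e) * monom 1 e \<in> ?J"
        by (rule gen_mult[OF ns]) (use e ns fG in \<open>auto simp: Ii_monom intro!: gen_mem\<close>)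
      then show ?thesis using e(2) by (simp add: mult_monom)
    qed
  qed
  then show "p \<in> ?J" by (simp add: poly_as_sum_of_monoms)
qed

definition principal :: "nat set \<Rightarrow> nat set \<Rightarrow> bool" where
  "principal H E \<longleftrightarrow> (\<exists>b\<in>E. \<forall>m\<in>E. b \<le> m \<and> m - b \<in> H)"

lemma mu_le1:
  assumes ns: "numerical_semigroup H" and si: "sgideal H E" and pr: "principal H E"
  shows "mu (semigroup_ring H) (Ii E :: 'a::field poly set) \<le> 1"
proof -
  obtain b where b: "b \<in> E" "\<forall>m\<in>E. b \<le> m \<and> m - b \<in> H" using pr by (auto simp: principal_def)
  have "ideal_gen (Ii H) ((\<lambda>e. monom 1 e) ` {b}) = (Ii E :: 'a::field poly set)"
    by (rule gen_eq[OF ns si]) (use b in auto)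
  then have "\<exists>S. finite S \<and> S \<subseteq> (Ii E :: 'a poly set) \<and> card S = 1 \<and> ideal_gen (Ii H) S = Ii E"
    using b by (intro exI[of _ "{monom 1 b}"]) (auto simp: Ii_monom)
  then show ?thesis unfolding mu_def R_eq by (rule Least_le)
qed

lemma gen_single:
  fixes p :: "'a::field poly"
  assumes "q \<in> ideal_gen R {p}"
  shows "\<exists>r\<in>R. q = r * p"
  using assms by (auto simp: ideal_gen_def)

lemma mu_ge2:
  assumes ns: "numerical_semigroup H" and si: "sgideal H E" and ne: "E \<noteq> {}"
    and np: "\<not> principal H E"
  shows "2 \<le> mu (semigroup_ring H) (Ii E :: 'a::field poly set)"
proof -
  define P where "P = (\<lambda>n. \<exists>S. finite S \<and> S \<subseteq> (Ii E :: 'a poly set) \<and> card S = n \<and> ideal_gen (Ii H) S = Ii E)"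
  obtain e0 where e0: "e0 \<in> E" using ne by blast
  define G where "G = {e\<in>E. e \<le> e0 + conductor H}"
  have fG: "finite G" unfolding G_def by simp
  have "ideal_gen (Ii H) ((\<lambda>e. monom 1 e) ` G) = (Ii E :: 'a poly set)"
  proof (rule gen_eq[OF ns si fG])
    show "G \<subseteq> E" unfolding G_def by auto
    show "\<forall>m\<in>E. \<exists>e\<in>G. e \<le> m \<and> m - e \<in> H"
    proof
      fix m assume m: "m \<in> E"
      show "\<exists>e\<in>G. e \<le> m \<and> m - e \<in> H"
      proof (cases "m \<le> e0 + conductor H")
        case True
        then have "m \<in> G" using m by (simp add: G_def)
        moreover have "0 \<in> H" using ns by (simp add: numerical_semigroup_def)
        ultimately show ?thesis by auto
      next
        case False
        then have "e0 \<in> G" "m - e0 \<in> H" using e0 cond_ge[OF ns, of "m - e0"] by (auto simp: G_def)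
        moreover have "e0 \<le> m" using False by simp
        ultimately show ?thesis by blast
      qed
    qed
  qed
  then have "P (card ((\<lambda>e. monom (1::'a) e) ` G))" unfolding P_def using fG
    by (intro exI[of _ "(\<lambda>e. monom (1::'a) e) ` G"]) (auto simp: G_def Ii_monom)
  then have "P (mu (semigroup_ring H) (Ii E :: 'a poly set))" unfolding mu_def R_eq P_def
    by (rule LeastI)
  then obtain S where S: "finite S" "S \<subseteq> (Ii E :: 'a poly set)" "card S = mu (semigroup_ring H) (Ii E :: 'a poly set)"
    "ideal_gen (Ii H) S = Ii E" unfolding P_def by blast
  have m1: "monom 1 e0 \<in> (Ii E :: 'a poly set)" using e0 by (simp add: Ii_monom)
  show ?thesis
  proof (rule ccontr)
    assume "\<not> ?thesis"
    then have "card S = 0 \<or> card S = 1" using S(3) by linarith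
    then show False
    proof
      assume "card S = 0"
      then have "S = {}" using S(1) by simp
      then have "Ii E = {0::'a poly}" using S(4) by (simp add: ideal_gen_def)
      then show False using m1 by simp
    next
      assume "card S = 1"
      then obtain p where Sp: "S = {p}" using card_1_singletonE by blast
      then have pI: "p \<in> Ii E" using S(2) by simp
      have gen: "\<And>q. q \<in> Ii E \<Longrightarrow> \<exists>r\<in>Ii H. q = r * p" using S(4) Sp gen_single by blast
      define a where "a = (LEAST a. a \<in> E)"
      have aE: "a \<in> E" unfolding a_def using e0 by (rule LeastI)
      have amin: "\<And>j. j \<in> E \<Longrightarrow> a \<le> j" unfolding a_def by (rule Least_le)
      obtain r where r: "r \<in> Ii H" "monom 1 a = r * p" using gen[of "monom 1 a"] aE by (auto simp: Ii_monom)
      have "r \<noteq> 0" "p \<noteq> 0" using r(2) by (auto simp: monom_eq_0_iff)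
      then have "degree p \<le> a" using r(2) degree_mult_eq[of r p] degree_monom_eq[of "1::'a" a] by simp
      have peq: "p = monom (coeff p a) a"
      proof (rule poly_eqI)
        fix j
        show "coeff p j = coeff (monom (coeff p a) a) j"
        proof (cases "j < a")
          case True
          then have "coeff p j = 0" using pI amin by (auto simp: Ii_def) (meson leD)
          then show ?thesis using True by simp
        next
          case False
          then show ?thesis using \<open>degree p \<le> a\<close> by (auto simp: coeff_eq_0)
        qed
      qed
      have "principal H E" unfolding principal_def
      proof (intro bexI[OF _ aE] ballI)
        fix m assume "m \<in> E"
        then obtain r' where r': "r' \<in> Ii H" "monom 1 m = r' * p" using gen[of "monom 1 m"] by (auto simp: Ii_monom)
        have "1 = coeff (monom 1 m :: 'a poly) m" by simp
        also have "\<dots> = coeff (monom (coeff p a) a * r') m" using r'(2) peq by (simp add: mult.commute)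
        also have "\<dots> = (if m < a then 0 else coeff p a * coeff r' (m - a))" by (rule coeff_monom_mult)
        finally have "\<not> m < a" "coeff r' (m - a) \<noteq> 0" by (auto split: if_splits)
        then show "a \<le> m \<and> m - a \<in> H" using r'(1) by (auto simp: Ii_def)
      qed
      then show False using np by simp
    qed
  qed
qed

lemma Ii_coeff0: "p \<in> Ii E \<Longrightarrow> n \<notin> E \<Longrightarrow> coeff p n = 0"
  by (auto simp: Ii_def)

definition Soc :: "nat set \<Rightarrow> nat set \<Rightarrow> nat set" where
  "Soc H E = {h\<in>H. \<forall>m\<in>H. m \<noteq> 0 \<longrightarrow> h + m \<in> E}"

lemma socle_eq:
  assumes ns: "numerical_semigroup H" and si: "sgideal H E"
  shows "socle_pre (semigroup_ring H) (Ii E :: 'a::field poly set) = Ii (Soc H E)"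
proof safe
  fix p :: "'a poly" assume p: "p \<in> socle_pre (semigroup_ring H) (Ii E)"
  then have pH: "p \<in> Ii H" and pq: "\<And>q. q \<in> max_ideal (Ii H) \<Longrightarrow> p * q \<in> Ii E"
    by (auto simp: socle_pre_def R_eq)
  show "p \<in> Ii (Soc H E)" unfolding Ii_def
  proof (intro CollectI allI impI)
    fix j assume cj: "coeff p j \<noteq> 0"
    then have jH: "j \<in> H" using pH by (auto simp: Ii_def)
    have "\<forall>m\<in>H. m \<noteq> 0 \<longrightarrow> j + m \<in> E"
    proof (intro ballI impI)
      fix m assume m: "m \<in> H" "m \<noteq> 0"
      then have "monom 1 m \<in> max_ideal (Ii H)" by (simp add: max_ideal_def Ii_monom)
      then have "p * monom 1 m \<in> Ii E" by (rule pq)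
      moreover have "coeff (p * monom 1 m) (j + m) = coeff p j"
        by (simp add: mult.commute[of p] coeff_monom_mult)
      ultimately show "j + m \<in> E" using cj by (auto simp: Ii_def)
    qed
    then show "j \<in> Soc H E" using jH by (simp add: Soc_def)
  qed
next
  fix p :: "'a poly" assume p: "p \<in> Ii (Soc H E)"
  have pH: "p \<in> Ii H" using p by (auto simp: Ii_def Soc_def)
  have "\<forall>q\<in>max_ideal (Ii H). p * q \<in> Ii E"
  proof
    fix q :: "'a poly" assume q: "q \<in> max_ideal (Ii H)"
    show "p * q \<in> Ii E" unfolding Ii_def
    proof (intro CollectI allI impI)
      fix n assume "coeff (p * q) n \<noteq> 0"
      then obtain i where i: "i \<le> n" "coeff p i * coeff q (n - i) \<noteq> 0"
        unfolding coeff_mult by (metis (no_types, lifting) atMost_iff sum.neutral)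
      then have "i \<in> Soc H E" "n - i \<in> H" "n - i \<noteq> 0" using p q by (auto simp: Ii_def max_ideal_def)
      then have "i + (n - i) \<in> E" by (auto simp: Soc_def)
      then show "n \<in> E" using i(1) by simp
    qed
  qed
  then show "p \<in> socle_pre (semigroup_ring H) (Ii E)" using pH by (simp add: socle_pre_def R_eq)
qed

lemma gor_char:
  assumes ns: "numerical_semigroup H" and si: "sgideal H E"
  shows "gorenstein_quot (semigroup_ring H) (Ii E :: 'a::field poly set) \<longleftrightarrow>
     (\<exists>n. n \<in> Soc H E - E \<and> (\<forall>n'\<in>Soc H E - E. n' = n))"
proof
  assume "gorenstein_quot (semigroup_ring H) (Ii E :: 'a::field poly set)"
  then obtain s :: "'a poly" where s: "s \<in> Ii (Soc H E)" "s \<notin> Ii E"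
    and all: "\<And>p. p \<in> Ii (Soc H E) \<Longrightarrow> \<exists>c. p - smult c s \<in> Ii E"
    unfolding gorenstein_quot_def socle_eq[OF ns si] by blast
  obtain n where n: "coeff s n \<noteq> 0" "n \<notin> E" using s(2) by (auto simp: Ii_def)
  then have nS: "n \<in> Soc H E" using s(1) by (auto simp: Ii_def)
  have "\<forall>n'\<in>Soc H E - E. n' = n"
  proof (rule ballI, rule ccontr)
    fix n' assume n': "n' \<in> Soc H E - E" "n' \<noteq> n"
    obtain c where "monom 1 n' - smult c s \<in> Ii E" using all[of "monom 1 n'"] n' by (auto simp: Ii_monom)
    then have "coeff (monom 1 n' - smult c s) n' = 0" using n' by (intro Ii_coeff0) auto
    then have c1: "c * coeff s n' = 1" by simp
    obtain c2 where "monom 1 n - smult c2 s \<in> Ii E" using all[of "monom 1 n"] nS by (auto simp: Ii_monom)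
    then have "coeff (monom 1 n - smult c2 s) n' = 0" using n' by (intro Ii_coeff0) auto
    moreover have "coeff (monom 1 n - smult c2 s) n = 0" using \<open>monom 1 n - smult c2 s \<in> Ii E\<close> n by (intro Ii_coeff0) auto
    ultimately have "c2 * coeff s n' = 0" "c2 * coeff s n = 1" using n' by auto
    then show False using c1 by auto
  qed
  then show "\<exists>n. n \<in> Soc H E - E \<and> (\<forall>n'\<in>Soc H E - E. n' = n)" using nS n by blast
next
  assume "\<exists>n. n \<in> Soc H E - E \<and> (\<forall>n'\<in>Soc H E - E. n' = n)"
  then obtain n where n: "n \<in> Soc H E" "n \<notin> E" and u: "\<And>n'. n' \<in> Soc H E \<Longrightarrow> n' \<notin> E \<Longrightarrow> n' = n" by blast
  have "monom 1 n \<in> Ii (Soc H E)" "monom 1 n \<notin> (Ii E :: 'a poly set)" using n by (auto simp: Ii_monom)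
  moreover have "\<exists>c. p - smult c (monom 1 n) \<in> Ii E" if p: "p \<in> Ii (Soc H E)" for p :: "'a poly"
  proof (intro exI[of _ "coeff p n"])
    show "p - smult (coeff p n) (monom 1 n) \<in> Ii E" unfolding Ii_def
    proof (intro CollectI allI impI)
      fix j assume "coeff (p - smult (coeff p n) (monom 1 n)) j \<noteq> 0"
      then have "j \<noteq> n" "coeff p j \<noteq> 0" by (auto split: if_splits)
      then show "j \<in> E" using p u by (auto simp: Ii_def)
    qed
  qed
  ultimately show "gorenstein_quot (semigroup_ring H) (Ii E :: 'a::field poly set)"
    unfolding gorenstein_quot_def socle_eq[OF ns si] by blast
qed

definition En :: "nat set \<Rightarrow> nat \<Rightarrow> nat set" where
  "En H n = {h\<in>H. \<not> (h \<le> n \<and> n - h \<in> H)}"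

lemma ns_add: "numerical_semigroup H \<Longrightarrow> a \<in> H \<Longrightarrow> b \<in> H \<Longrightarrow> a + b \<in> H"
  by (simp add: numerical_semigroup_def)

lemma ns_0: "numerical_semigroup H \<Longrightarrow> 0 \<in> H"
  by (simp add: numerical_semigroup_def)

lemma En_sg: assumes ns: "numerical_semigroup H" shows "sgideal H (En H n)"
  unfolding sgideal_def
proof safe
  fix h assume "h \<in> En H n" then show "h \<in> H" by (simp add: En_def)
next
  fix h k assume h: "h \<in> En H n" and k: "k \<in> H"
  have hH: "h \<in> H" and nh: "\<not> (h \<le> n \<and> n - h \<in> H)" using h by (auto simp: En_def)
  have "\<not> (h + k \<le> n \<and> n - (h + k) \<in> H)"
  proof
    assume a: "h + k \<le> n \<and> n - (h + k) \<in> H"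
    then have "n - (h + k) + k \<in> H" using ns_add[OF ns] k by blast
    moreover have "n - (h + k) + k = n - h" using a by simp
    ultimately show False using nh a by simp
  qed
  then show "h + k \<in> En H n" using ns_add[OF ns hH k] by (simp add: En_def)
qed

lemma En_soc:
  assumes ns: "numerical_semigroup H" and n: "n \<in> H"
  shows "n \<in> Soc H (En H n) - En H n \<and> (\<forall>n'\<in>Soc H (En H n) - En H n. n' = n)"
proof safe
  show "n \<in> Soc H (En H n)" using n ns_add[OF ns n] by (auto simp: Soc_def En_def)
  show "n \<in> En H n \<Longrightarrow> False" using ns_0[OF ns] by (simp add: En_def)
next
  fix n' assume a: "n' \<in> Soc H (En H n)" "n' \<notin> En H n"
  then have "n' \<in> H" by (simp add: Soc_def)
  then have b: "n' \<le> n" "n - n' \<in> H" using a(2) by (auto simp: En_def)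
  show "n' = n"
  proof (rule ccontr)
    assume "n' \<noteq> n"
    then have "n' + (n - n') \<in> En H n" using a(1) b by (auto simp: Soc_def)
    then show False using b ns_0[OF ns] by (simp add: En_def)
  qed
qed

lemma soc_En:
  assumes ns: "numerical_semigroup H" and si: "sgideal H E" and n: "n \<in> Soc H E" "n \<notin> E"
    and u: "\<forall>n'\<in>Soc H E - E. n' = n"
  shows "E = En H n"
proof safe
  fix h assume h: "h \<in> E"
  have "h \<in> H" using h si by (auto simp: sgideal_def)
  moreover have "\<not> (h \<le> n \<and> n - h \<in> H)"
  proof
    assume "h \<le> n \<and> n - h \<in> H"
    then have "h + (n - h) \<in> E" using h si unfolding sgideal_def by blast
    moreover have "h + (n - h) = n" using \<open>h \<le> n \<and> n - h \<in> H\<close> by simp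
    ultimately show False using n by simp
  qed
  ultimately show "h \<in> En H n" by (simp add: En_def)
next
  fix h assume h: "h \<in> En H n"
  show "h \<in> E"
  proof (rule ccontr)
  assume hE: "h \<notin> E"
  have hH: "h \<in> H" using h by (simp add: En_def)
  have nH: "n \<in> H" using n by (simp add: Soc_def)
  define c where "c = conductor H"
  have "c + 1 \<in> H" using cond_ge[OF ns] c_def by simp
  then have e0: "n + (c + 1) \<in> E" using n by (auto simp: Soc_def)
  define T where "T = {h'. h \<le> h' \<and> h' - h \<in> H \<and> h' \<notin> E}"
  have hT: "h \<in> T" using hE ns_0[OF ns] by (simp add: T_def)
  have Tb: "T \<subseteq> {..< n + (c + 1) + c}"
  proof
    fix x assume x: "x \<in> T"
    show "x \<in> {..< n + (c + 1) + c}"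
    proof (rule ccontr)
      assume "x \<notin> {..< n + (c + 1) + c}"
      then have "x - (n + (c + 1)) \<in> H" "x = n + (c + 1) + (x - (n + (c + 1)))"
        using cond_ge[OF ns, of "x - (n + (c + 1))"] c_def by auto
      then have "x \<in> E" using e0 si unfolding sgideal_def by (metis (no_types, lifting))
      then show False using x by (simp add: T_def)
    qed
  qed
  then have fT: "finite T" using finite_subset by blast
  define h' where "h' = Max T"
  have h'T: "h' \<in> T" using fT hT h'_def Max_in by blast
  have h'max: "\<And>x. x \<in> T \<Longrightarrow> x \<le> h'" using fT h'_def by simp
  have h'H: "h' \<in> H" using h'T hH ns_add[OF ns hH, of "h' - h"] by (auto simp: T_def)
  have "h' \<in> Soc H E" unfolding Soc_def
  proof (intro CollectI conjI ballI impI h'H)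
    fix m assume m: "m \<in> H" "m \<noteq> 0"
    show "h' + m \<in> E"
    proof (rule ccontr)
      assume "h' + m \<notin> E"
      moreover have hh: "h \<le> h'" "h' - h \<in> H" using h'T by (simp_all add: T_def)
      moreover have "h' + m - h = (h' - h) + m" using hh(1) by simp
      moreover have "(h' - h) + m \<in> H" using ns_add[OF ns hh(2) m(1)] .
      ultimately have "h' + m \<in> T" unfolding T_def by simp
      then have "h' + m \<le> h'" by (rule h'max)
      then show False using m(2) by simp
    qed
  qed
  moreover have "h' \<notin> E" using h'T unfolding T_def by blast
  ultimately have "h' = n" using u by blast
  then have "h \<le> n" "n - h \<in> H" using h'T unfolding T_def by simp_all
  then show False using h unfolding En_def by simp
  qed
qed

lemma En_inj:
  assumes ns: "numerical_semigroup H" and "n \<in> H" "n' \<in> H" "En H n = En H n'"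
  shows "n = n'"
proof -
  have "n \<notin> En H n" "n' \<notin> En H n'" using ns_0[OF ns] unfolding En_def by simp_all
  then have "n \<notin> En H n'" "n' \<notin> En H n" using assms(4) by simp_all
  then have "n \<le> n'" "n' \<le> n" using assms(2,3) unfolding En_def by simp_all
  then show ?thesis by simp
qed

lemma En_ne: assumes ns: "numerical_semigroup H" shows "En H n \<noteq> {}"
proof -
  have "n + conductor H + 1 \<in> En H n" using cond_ge[OF ns, of "n + conductor H + 1"] by (simp add: En_def)
  then show ?thesis by blast
qed



lemma sym_prop:
  assumes ns: "numerical_semigroup H" and sym: "symmetric_sg H" and c0: "conductor H > 0"
    and y: "y \<notin> H"
  shows "y \<le> conductor H - 1 \<and> conductor H - 1 - y \<in> H"
proof -
  define c where "c = conductor H"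
  define F where "F = c - 1"
  define A where "A = {n\<in>H. n < c}"
  define G where "G = UNIV - H"
  have fG: "finite G" using ns by (simp add: numerical_semigroup_def G_def)
  have FH: "F \<notin> H" using cond_F[OF ns c0] by (simp add: F_def c_def)
  have sub: "(\<lambda>h. F - h) ` A \<subseteq> G"
  proof
    fix x assume "x \<in> (\<lambda>h. F - h) ` A"
    then obtain h where h: "h \<in> H" "h < c" "x = F - h" by (auto simp: A_def)
    have "x \<notin> H"
    proof
      assume "x \<in> H"
      then have "h + (F - h) \<in> H" using ns_add[OF ns h(1)] h(3) by simp
      moreover have "h + (F - h) = F" using h(2) by (simp add: F_def)
      ultimately show False using FH by simp
    qed
    then show "x \<in> G" by (simp add: G_def)
  qed
  have inj: "inj_on (\<lambda>h. F - h) A"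
    by (rule inj_onI) (auto simp: A_def F_def)
  have "card ((\<lambda>h. F - h) ` A) = card G"
    using card_image[OF inj] sym by (simp add: symmetric_sg_def A_def G_def c_def)
  then have eq: "(\<lambda>h. F - h) ` A = G" using card_subset_eq[OF fG sub] by simp
  have "y \<in> G" using y by (simp add: G_def)
  then obtain h where h: "h \<in> A" "y = F - h" using eq by blast
  then have "F - y = h" "y \<le> F" using h by (auto simp: A_def F_def)
  then show ?thesis using h(1) by (simp add: A_def F_def c_def)
qed

lemma principal_imp:
  assumes ns: "numerical_semigroup H" and c0: "conductor H > 0" and n: "n \<in> H"
    and pr: "principal H (En H n)"
  shows "conductor H \<le> n \<and> n - (conductor H - 1) \<in> H"
proof -
  define c where "c = conductor H"
  define F where "F = c - 1"
  have FH: "F \<notin> H" using cond_F[OF ns c0] by (simp add: F_def c_def)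
  obtain b where b: "b \<in> En H n" "\<And>m. m \<in> En H n \<Longrightarrow> b \<le> m \<and> m - b \<in> H"
    using pr by (auto simp: principal_def)
  have bH: "b \<in> H" using b(1) by (simp add: En_def)
  have "b \<noteq> 0"
  proof
    assume "b = 0" then show False using b(1) n by (simp add: En_def)
  qed
  then have xc: "c \<le> F + b" using c0 by (simp add: F_def c_def)
  then have xH: "F + b \<in> H" using cond_ge[OF ns] by (simp add: c_def)
  have xnE: "F + b \<notin> En H n"
  proof
    assume "F + b \<in> En H n"
    then have "F + b - b \<in> H" using b(2) by blast
    then show False using FH by simp
  qed
  have xS: "F + b \<in> Soc H (En H n)" unfolding Soc_def
  proof (intro CollectI conjI ballI impI xH)
    fix m assume m: "m \<in> H" "m \<noteq> 0"
    have "F + m \<in> H" using cond_ge[OF ns, of "F + m"] m(2) c0 by (simp add: F_def c_def)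
    then have "b + (F + m) \<in> En H n" using En_sg[OF ns, of n] b(1) unfolding sgideal_def by blast
    then show "F + b + m \<in> En H n" by (simp add: add.commute add.left_commute)
  qed
  have "F + b = n" using En_soc[OF ns n] xS xnE by blast
  then have "n - F = b" "c \<le> n" using xc by auto
  then show ?thesis using bH by (simp add: F_def c_def)
qed

lemma imp_principal:
  assumes ns: "numerical_semigroup H" and sym: "symmetric_sg H" and c0: "conductor H > 0"
    and n: "n \<in> H" and cn: "conductor H \<le> n" and nF: "n - (conductor H - 1) \<in> H"
  shows "principal H (En H n)"
proof -
  define c where "c = conductor H"
  define F where "F = c - 1"
  define e where "e = n - F"
  have FH: "F \<notin> H" using cond_F[OF ns c0] by (simp add: F_def c_def)
  have eH: "e \<in> H" using nF by (simp add: e_def F_def c_def)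
  have "n - e = F" using cn by (simp add: e_def F_def c_def)
  then have eE: "e \<in> En H n" using eH FH by (simp add: En_def)
  have "\<forall>m\<in>En H n. e \<le> m \<and> m - e \<in> H"
  proof
    fix m assume m: "m \<in> En H n"
    then have mH: "m \<in> H" and nm: "\<not> (m \<le> n \<and> n - m \<in> H)" by (auto simp: En_def)
    show "e \<le> m \<and> m - e \<in> H"
    proof (cases "m \<le> n")
      case False
      then have "c \<le> m - e" using cn by (simp add: e_def F_def c_def)
      then show ?thesis using cond_ge[OF ns, of "m - e"] False by (simp add: c_def e_def)
    next
      case True
      then have "n - m \<notin> H" using nm by simp
      then have "n - m \<le> F" "F - (n - m) \<in> H" using sym_prop[OF ns sym c0] by (simp_all add: F_def c_def)
      moreover have "m - e = F - (n - m)" "e \<le> m" using True \<open>n - m \<le> F\<close> cn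
        by (simp_all add: e_def F_def c_def)
      ultimately show ?thesis by simp
    qed
  qed
  then show ?thesis using eE by (auto simp: principal_def)
qed

lemma c0_principal:
  assumes ns: "numerical_semigroup H" and c0: "conductor H = 0"
  shows "principal H (En H n)"
proof -
  have all: "\<And>m. m \<in> H" using cond_ge[OF ns] c0 by simp
  have "Suc n \<in> En H n" using all by (simp add: En_def)
  moreover have "\<forall>m\<in>En H n. Suc n \<le> m \<and> m - Suc n \<in> H" using all by (auto simp: En_def)
  ultimately show ?thesis by (auto simp: principal_def)
qed

lemma count:
  assumes ns: "numerical_semigroup H" and c0: "conductor H > 0"
  shows "finite {n\<in>H. \<not> (conductor H \<le> n \<and> n - (conductor H - 1) \<in> H)}
    \<and> card {n\<in>H. \<not> (conductor H \<le> n \<and> n - (conductor H - 1) \<in> H)} = conductor H"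
proof -
  define c where "c = conductor H"
  define F where "F = c - 1"
  define A where "A = {n\<in>H. n < c}"
  define G where "G = UNIV - H"
  define B where "B = (\<lambda>g. g + F) ` G"
  have fG: "finite G" using ns by (simp add: numerical_semigroup_def G_def)
  have H0: "0 \<in> H" by (rule ns_0[OF ns])
  have eq: "{n\<in>H. \<not> (c \<le> n \<and> n - F \<in> H)} = A \<union> B"
  proof (rule equalityI; rule subsetI)
    fix n assume "n \<in> {n\<in>H. \<not> (c \<le> n \<and> n - F \<in> H)}"
    then have n: "n \<in> H" "\<not> (c \<le> n \<and> n - F \<in> H)" by simp_all
    show "n \<in> A \<union> B"
    proof (cases "n < c")
      case True then show ?thesis using n by (simp add: A_def)
    next
      case False
      then have "c \<le> n" by simp
      then have "n - F \<in> G" "n = (n - F) + F" using n by (auto simp: G_def F_def)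
      then have "n \<in> B" unfolding B_def by blast
      then show ?thesis by simp
    qed
  next
    fix n assume "n \<in> A \<union> B"
    then show "n \<in> {n\<in>H. \<not> (c \<le> n \<and> n - F \<in> H)}"
    proof
      assume "n \<in> A" then show ?thesis by (simp add: A_def)
    next
      assume "n \<in> B"
      then obtain g where g: "g \<notin> H" "n = g + F" by (auto simp: B_def G_def)
      then have "g \<noteq> 0" using H0 by (metis)
      then have "c \<le> n" using g c0 by (simp add: F_def c_def)
      then have "n \<in> H" using cond_ge[OF ns] by (simp add: c_def)
      moreover have "n - F \<notin> H" using g by simp
      ultimately show ?thesis by simp
    qed
  qed
  have fA: "finite A" by (simp add: A_def)
  have fB: "finite B" using fG by (simp add: B_def)
  have disj: "A \<inter> B = {}"
  proof safe
    fix x assume "x \<in> A" "x \<in> B"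
    then obtain g where g: "g \<notin> H" "x = g + F" by (auto simp: B_def G_def)
    then have "g \<noteq> 0" using H0 by (metis)
    then have "c \<le> x" using g c0 by (simp add: F_def c_def)
    then show "x \<in> {}" using \<open>x \<in> A\<close> by (simp add: A_def)
  qed
  have cB: "card B = card G" unfolding B_def by (rule card_image) (simp add: inj_on_def)
  have "card {..<c} = card ({..<c} \<inter> H) + card ({..<c} - H)" by (rule card_Int_Diff) simp
  moreover have "{..<c} \<inter> H = A" by (auto simp: A_def)
  moreover have "{..<c} - H = G" using gaps_lt[OF ns] by (auto simp: G_def c_def)
  ultimately have "card A + card G = c" by simp
  then have "card (A \<union> B) = c" using card_Un_disjoint[OF fA fB disj] cB by simp
  then show ?thesis using eq fA fB by (simp add: c_def F_def)
qed

lemma main_set: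
  assumes ns: "numerical_semigroup H"
  shows "{I :: 'a::field poly set.
            graded_ideal (semigroup_ring H) I \<and> gorenstein_quot (semigroup_ring H) I
            \<and> mu (semigroup_ring H) I \<ge> 2}
       = (\<lambda>n. Ii (En H n)) ` {n\<in>H. \<not> principal H (En H n)}"
proof (rule equalityI; rule subsetI)
  fix I :: "'a poly set"
  assume "I \<in> {I :: 'a::field poly set.
            graded_ideal (semigroup_ring H) I \<and> gorenstein_quot (semigroup_ring H) I
            \<and> mu (semigroup_ring H) I \<ge> 2}"
  then have g: "graded_ideal (semigroup_ring H) I" and go: "gorenstein_quot (semigroup_ring H) I"
    and m: "mu (semigroup_ring H) I \<ge> 2" by simp_all
  define E where "E = {n. monom (1::'a) n \<in> I}"
  have G: "sgideal H E \<and> I = Ii E" using graded_Ii[OF ns g] unfolding E_def .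
  have si: "sgideal H E" using G by (rule conjunct1)
  have IE: "I = Ii E" using G by (rule conjunct2)
  have "gorenstein_quot (semigroup_ring H) (Ii E :: 'a poly set)" using go IE by simp
  then obtain n where n: "n \<in> Soc H E - E" "\<forall>n'\<in>Soc H E - E. n' = n"
    unfolding gor_char[OF ns si] by blast
  have EE: "E = En H n" using n by (intro soc_En[OF ns si]) blast+
  have nH: "n \<in> H" using n(1) by (simp add: Soc_def)
  have "\<not> principal H (En H n)"
  proof
    assume "principal H (En H n)"
    then have "mu (semigroup_ring H) (Ii (En H n) :: 'a poly set) \<le> 1"
      by (rule mu_le1[OF ns En_sg[OF ns]])
    then show False using m IE EE by simp
  qed
  moreover have "I = Ii (En H n)" using IE EE by simp
  ultimately show "I \<in> (\<lambda>n. Ii (En H n)) ` {n\<in>H. \<not> principal H (En H n)}"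
    using nH by (intro image_eqI[of _ _ n]) simp_all
next
  fix I :: "'a poly set"
  assume "I \<in> (\<lambda>n. Ii (En H n)) ` {n\<in>H. \<not> principal H (En H n)}"
  then obtain n where n: "n \<in> H" "\<not> principal H (En H n)" and I: "I = Ii (En H n)" by blast
  have "graded_ideal (semigroup_ring H) I" using Ii_graded[OF ns En_sg[OF ns]] I by simp
  moreover have "gorenstein_quot (semigroup_ring H) (Ii (En H n) :: 'a poly set)"
    unfolding gor_char[OF ns En_sg[OF ns]] using En_soc[OF ns n(1)] by blast
  then have "gorenstein_quot (semigroup_ring H) I" using I by simp
  moreover have "mu (semigroup_ring H) I \<ge> 2"
    using mu_ge2[OF ns En_sg[OF ns] En_ne[OF ns] n(2)] I by simp
  ultimately show "I \<in> {I :: 'a::field poly set.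
            graded_ideal (semigroup_ring H) I \<and> gorenstein_quot (semigroup_ring H) I
            \<and> mu (semigroup_ring H) I \<ge> 2}" by simp
qed

lemma Ii_inj: "(Ii E :: 'a::field poly set) = Ii E' \<Longrightarrow> E = E'"
proof -
  assume a: "(Ii E :: 'a::field poly set) = Ii E'"
  have "\<And>m. m \<in> E \<longleftrightarrow> m \<in> E'"
  proof -
    fix m
    have "m \<in> E \<longleftrightarrow> monom (1::'a) m \<in> Ii E" by (simp add: Ii_monom)
    also have "\<dots> \<longleftrightarrow> monom (1::'a) m \<in> Ii E'" using a by simp
    also have "\<dots> \<longleftrightarrow> m \<in> E'" by (simp add: Ii_monom)
    finally show "m \<in> E \<longleftrightarrow> m \<in> E'" .
  qed
  then show "E = E'" by blast
qed

theorem theorem1p2: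
  fixes H :: "nat set"
  assumes "numerical_semigroup H"
    and "symmetric_sg H"
  shows "finite {I :: 'a::field poly set.
            graded_ideal (semigroup_ring H) I \<and> gorenstein_quot (semigroup_ring H) I
            \<and> mu (semigroup_ring H) I \<ge> 2}
       \<and> card {I :: 'a::field poly set.
            graded_ideal (semigroup_ring H) I \<and> gorenstein_quot (semigroup_ring H) I
            \<and> mu (semigroup_ring H) I \<ge> 2} = conductor H"
proof -
  note ns = assms(1) and sym = assms(2)
  define N where "N = {n\<in>H. \<not> principal H (En H n)}"
  have inj: "inj_on (\<lambda>n. Ii (En H n) :: 'a poly set) N"
  proof (rule inj_onI)
    fix x y assume "x \<in> N" "y \<in> N" "(Ii (En H x) :: 'a poly set) = Ii (En H y)"
    then have "x \<in> H" "y \<in> H" "En H x = En H y" using Ii_inj by (auto simp: N_def)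
    then show "x = y" by (rule En_inj[OF ns])
  qed
  have NC: "finite N \<and> card N = conductor H"
  proof (cases "conductor H = 0")
    case True
    then have "N = {}" using c0_principal[OF ns] by (simp add: N_def)
    then show ?thesis using True by simp
  next
    case False
    then have c0: "conductor H > 0" by simp
    have iff: "\<And>n. n \<in> H \<Longrightarrow> principal H (En H n) \<longleftrightarrow> (conductor H \<le> n \<and> n - (conductor H - 1) \<in> H)"
      using principal_imp[OF ns c0] imp_principal[OF ns sym c0] by blast
    have "N = {n\<in>H. \<not> (conductor H \<le> n \<and> n - (conductor H - 1) \<in> H)}"
      unfolding N_def using iff by auto
    then show ?thesis using count[OF ns c0] by simp
  qed
  have eq: "{I :: 'a::field poly set.
            graded_ideal (semigroup_ring H) I \<and> gorenstein_quot (semigroup_ring H) I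
            \<and> mu (semigroup_ring H) I \<ge> 2} = (\<lambda>n. Ii (En H n)) ` N"
    using main_set[OF ns] by (simp add: N_def)
  show ?thesis unfolding eq using NC card_image[OF inj] by simp
qed

end
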